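(* Let $N\ge 1$, $0<p<1$, $q=1-p$. Let $(\mathbf{x}^0,\mathbf{t}^0)=((x^0_1,t^0_1),\dots,(x^0_N,t^0_N))$ and $(\mathbf{x},\mathbf{t})=((x_1,t_1),\dots,(x_N,t_N))$ be two admissible $N$-point configurations in $\mathbb{Z}^2$ such that $t_i>t_i^0$ for $i=1,\dots,N$. Then the generalized Green function satisfies $$G\big((\mathbf{x},\mathbf{t})\,|\,(\mathbf{x}^0,\mathbf{t}^0)\big)=\det\big[F_{j-i}(x_i-x^0_j,\;t_i-t^0_j)\big]_{i,j=1,\dots,N}.$$
   Context: An $N$-point configuration $((x_1,t_1),\dots,(x_N,t_N))\in(\mathbb{Z}^2)^N$ (first coordinate = space, second = time) is called admissible if $x_1>x_2>\dots>x_N$ and $t_1\le t_2\le\dots\le t_N$. A directed lattice path from $(a,s)$ to $(b,s')$, $s'>s$, is a sequence of points $(y^k,s+k)$, $k=0,\dots,s'-s$, with $y^0=a$, $y^{s'-s}=b$, $y^{k+1}-y^k\in\{0,1\}$. Given admissible $(\mathbf{x}^0,\mathbf{t}^0)$, $(\mathbf{x},\mathbf{t})$ with $t_i>t_i^0$, an $N$-path is a tuple $(\Pi_1,\dots,\Pi_N)$ where $\Pi_i$ is a directed lattice path from $(x_i^0,t_i^0)$ to $(x_i,t_i)$ (regarded also as a set of points of $\mathbb{Z}^2$). Its weight is $W=W[\Pi_1]\prod_{i=1}^{N-1}W[\Pi_{i+1}|\Pi_i]$, where $W[\Pi_1]$ is the product over the steps of $\Pi_1$ of $p$ for each step $(y,s)\to(y+1,s+1)$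 and $q$ for each step $(y,s)\to(y,s+1)$; and $W[\Pi_{i+1}|\Pi_i]$ is the product over the steps of $\Pi_{i+1}$ of the factors: for a step $(y,s)\to(y+1,s+1)$, the factor is $p$ if $(y+1,s+1)\notin\Pi_i$ and $0$ if $(y+1,s+1)\in\Pi_i$; for a step $(y,s)\to(y,s+1)$, the factor is $q$ if $(y+1,s+1)\notin\Pi_i$ and $1$ if $(y+1,s+1)\in\Pi_i$. The generalized Green function $G((\mathbf{x},\mathbf{t})|(\mathbf{x}^0,\mathbf{t}^0))$ is the sum of the weights of all such $N$-paths. For $n,x\in\mathbb{Z}$: $F_n(x,t)=\frac{1}{2\pi i}\oint_{\Gamma_0}\frac{dw}{w}\left(q+\frac{p}{w}\right)^t(1-w)^{-n}w^x$ for $t\ge 0$, and $F_n(x,t)=0$ for $t<0$, where $\Gamma_0$ is a positively oriented contour encircling the origin and leaving $w=1$ outside. *)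

theory Defs
  imports "HOL-Complex_Analysis.Complex_Analysis" "Jordan_Normal_Form.Determinant"
begin

text \<open>Configurations are indexed 1..N: particle i sits at (x i, t i) (space, time).\<close>

definition admissible :: "nat \<Rightarrow> (nat \<Rightarrow> int) \<Rightarrow> (nat \<Rightarrow> int) \<Rightarrow> bool" where
  "admissible N x t \<longleftrightarrow> (\<forall>i\<in>{1..<N}. x i > x (i+1) \<and> t i \<le> t (i+1))"

text \<open>A directed lattice path from (a,s) to (b,s') is encoded by the list ys of its
  space coordinates: the k-th point is (ys!k, s+k), k = 0..s'-s.\<close>

definition lattice_path :: "int \<Rightarrow> int \<Rightarrow> int \<Rightarrow> int \<Rightarrow> int list \<Rightarrow> bool" where
  "lattice_path a s b s' ys \<longleftrightarrow> s < s' \<and> length ys = nat (s' - s) + 1 \<and>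
     ys ! 0 = a \<and> ys ! nat (s' - s) = b \<and>
     (\<forall>k < nat (s' - s). ys ! (k+1) - ys ! k \<in> {0, 1})"

definition path_points :: "int \<Rightarrow> int list \<Rightarrow> (int \<times> int) set" where
  "path_points s ys = {(ys ! k, s + int k) | k. k < length ys}"

definition W_first :: "real \<Rightarrow> real \<Rightarrow> int list \<Rightarrow> real" where
  "W_first p q ys = (\<Prod>k < length ys - 1. if ys ! (k+1) = ys ! k + 1 then p else q)"

text \<open>Conditional weight W[Pi_{i+1} | Pi_i]: path ys starting at time s, previous path zs
  starting at time s0.\<close>
definition W_cond :: "real \<Rightarrow> real \<Rightarrow> int \<Rightarrow> int list \<Rightarrow> int \<Rightarrow> int list \<Rightarrow> real" where
  "W_cond p q s ys s0 zs = (\<Prod>k < length ys - 1.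
     (if (ys ! k + 1, s + int k + 1) \<in> path_points s0 zs
      then (if ys ! (k+1) = ys ! k + 1 then 0 else 1)
      else (if ys ! (k+1) = ys ! k + 1 then p else q)))"

definition N_paths :: "nat \<Rightarrow> (nat \<Rightarrow> int) \<Rightarrow> (nat \<Rightarrow> int) \<Rightarrow> (nat \<Rightarrow> int) \<Rightarrow> (nat \<Rightarrow> int)
    \<Rightarrow> (nat \<Rightarrow> int list) set" where
  "N_paths N x t x0 t0 = {P. (\<forall>i\<in>{1..N}. lattice_path (x0 i) (t0 i) (x i) (t i) (P i)) \<and>
                            (\<forall>i. i \<notin> {1..N} \<longrightarrow> P i = [])}"

definition N_path_weight :: "real \<Rightarrow> real \<Rightarrow> nat \<Rightarrow> (nat \<Rightarrow> int) \<Rightarrow> (nat \<Rightarrow> int list) \<Rightarrow> real" where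
  "N_path_weight p q N t0 P =
     W_first p q (P 1) * (\<Prod>i\<in>{1..<N}. W_cond p q (t0 (i+1)) (P (i+1)) (t0 i) (P i))"

definition green :: "real \<Rightarrow> real \<Rightarrow> nat \<Rightarrow> (nat \<Rightarrow> int) \<Rightarrow> (nat \<Rightarrow> int) \<Rightarrow> (nat \<Rightarrow> int) \<Rightarrow> (nat \<Rightarrow> int) \<Rightarrow> real" where
  "green p q N x t x0 t0 = (\<Sum>P\<in>N_paths N x t x0 t0. N_path_weight p q N t0 P)"

text \<open>F_n(x,t); the contour Gamma_0 is taken to be the circle of radius 1/2 around 0.\<close>
definition F_fun :: "real \<Rightarrow> real \<Rightarrow> int \<Rightarrow> int \<Rightarrow> int \<Rightarrow> complex" where
  "F_fun p q n x t = (if t < 0 then 0 else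
     contour_integral (circlepath 0 (1/2))
       (\<lambda>w. (complex_of_real q + complex_of_real p / w) ^ nat t * (1 - w) powi (- n) * w powi x / w)
     / (2 * complex_of_real pi * \<i>))"

end

theory Submission
  imports Defs
begin

definition cc :: "int \<Rightarrow> int \<Rightarrow> real" where
  "cc n m = (if m < 0 then 0 else pochhammer (of_int n) (nat m) / fact (nat m))"

fun gg :: "real \<Rightarrow> real \<Rightarrow> int \<Rightarrow> int \<Rightarrow> nat \<Rightarrow> real" where
  "gg p q n y 0 = cc n (-y)"
| "gg p q n y (Suc s) = p * gg p q n (y-1) s + q * gg p q n y s"

lemma deriv_funpow_powi:
  fixes w :: complex
  shows "w \<noteq> 1 \<Longrightarrow> (deriv ^^ m) (\<lambda>w. (1-w) powi (-n)) w = pochhammer (of_int n) m * (1-w) powi (-n - int m)"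
proof (induction m arbitrary: w)
  case 0
  then show ?case by simp
next
  case (Suc m)
  have ev: "\<forall>\<^sub>F z in nhds w. (deriv ^^ m) (\<lambda>w. (1-w) powi (-n)) z = pochhammer (of_int n) m * (1-z) powi (-n - int m)"
  proof -
    have "\<forall>\<^sub>F z in nhds w. z \<in> UNIV - {1::complex}"
      by (rule eventually_nhds_in_open) (use Suc.prems in auto)
    then show ?thesis
      by (rule eventually_mono) (use Suc.IH in auto)
  qed
  have d: "((\<lambda>z. pochhammer (of_int n) m * (1-z) powi (-n - int m)) has_field_derivative
     pochhammer (of_int n) m * (of_int (-n - int m) * (1-w) powi (-n - int m - 1) * (-1))) (at w)"
    using Suc.prems by (auto intro!: derivative_eq_intros)
  have "(deriv ^^ Suc m) (\<lambda>w. (1-w) powi (-n)) w = deriv ((deriv ^^ m) (\<lambda>w. (1-w) powi (-n))) w"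
    by simp
  also have "\<dots> = deriv (\<lambda>z. pochhammer (of_int n) m * (1-z) powi (-n - int m)) w"
    by (rule deriv_cong_ev[OF ev refl])
  also have "\<dots> = pochhammer (of_int n) m * (of_int (-n - int m) * (1-w) powi (-n - int m - 1) * (-1))"
    using d by (rule DERIV_imp_deriv)
  also have "\<dots> = pochhammer (of_int n) (Suc m) * (1-w) powi (-n - int (Suc m))"
    by (simp add: pochhammer_Suc algebra_simps)
  finally show ?case .
qed

definition Ig :: "real \<Rightarrow> real \<Rightarrow> int \<Rightarrow> int \<Rightarrow> nat \<Rightarrow> complex \<Rightarrow> complex" where
  "Ig p q n y s = (\<lambda>w. (complex_of_real q + complex_of_real p / w) ^ s * (1 - w) powi (- n) * w powi y / w)"

lemma path_image_half: "path_image (circlepath (0::complex) (1/2)) = sphere 0 (1/2)"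
  by (simp add: path_image_circlepath)

lemma Ig_base:
  "(Ig p q n y 0 has_contour_integral (2 * complex_of_real pi * \<i> * complex_of_real (gg p q n y 0)))
     (circlepath 0 (1/2))"
proof (cases "y \<ge> 1")
  case True
  define h where "h = (\<lambda>w::complex. (1-w) powi (-n) * w ^ (nat (y-1)))"
  have hol: "h holomorphic_on ball 0 1"
    unfolding h_def by (intro holomorphic_intros) (auto simp: dist_norm)
  have hi: "(h has_contour_integral 0) (circlepath 0 (1/2))"
    by (rule Cauchy_theorem_disc_simple[OF hol]) (auto simp: path_image_half)
  have eq: "\<forall>w\<in>path_image (circlepath 0 (1/2)). h w = Ig p q n y 0 w"
  proof
    fix w assume "w \<in> path_image (circlepath (0::complex) (1/2))"
    then have w0: "w \<noteq> 0" by (auto simp: path_image_half)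
    have "w powi y = w powi (1 + (y-1))" by simp
    also have "\<dots> = w powi 1 * w powi (y-1)" using w0 by (rule power_int_add[OF disjI1])
    also have "\<dots> = w * w powi (y-1)" by simp
    also have "w powi (y-1) = w ^ nat (y-1)" using True by (simp add: power_int_def)
    finally have e: "w powi y = w * w ^ nat (y-1)" .
    show "h w = Ig p q n y 0 w" unfolding h_def Ig_def e using w0 by simp
  qed
  have "(Ig p q n y 0 has_contour_integral 0) (circlepath 0 (1/2))"
    by (rule has_contour_integral_eq[OF hi]) (use eq in auto)
  moreover have "gg p q n y 0 = 0" using True by (simp add: cc_def)
  ultimately show ?thesis by simp
next
  case False
  define m where "m = nat (-y)"
  have ym: "y = - int m" using False by (simp add: m_def)
  define f where "f = (\<lambda>w::complex. (1-w) powi (-n))"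
  have "continuous_on (cball 0 (1/2)) f"
    unfolding f_def by (intro continuous_intros) (auto simp: dist_norm)
  moreover have "f holomorphic_on ball 0 (1/2)"
    unfolding f_def by (intro holomorphic_intros) (auto simp: dist_norm)
  ultimately have hi: "((\<lambda>u. f u / (u-0) ^ (Suc m)) has_contour_integral ((2 * pi * \<i>) / (fact m) * (deriv ^^ m) f 0))
           (circlepath 0 (1/2))"
    by (intro Cauchy_has_contour_integral_higher_derivative_circlepath) auto
  have dm: "(deriv ^^ m) f 0 = pochhammer (of_int n) m"
    unfolding f_def by (subst deriv_funpow_powi) auto
  have eq: "\<forall>w\<in>path_image (circlepath 0 (1/2)). f w / (w-0) ^ (Suc m) = Ig p q n y 0 w"
  proof
    fix w assume "w \<in> path_image (circlepath (0::complex) (1/2))"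
    then have w0: "w \<noteq> 0" by (auto simp: path_image_half)
    have e: "w powi y = inverse (w ^ m)" by (simp add: ym power_int_minus)
    show "f w / (w-0) ^ (Suc m) = Ig p q n y 0 w" unfolding Ig_def e using w0
      by (simp add: f_def divide_inverse mult.commute)
  qed
  have "(Ig p q n y 0 has_contour_integral ((2 * pi * \<i>) / (fact m) * pochhammer (of_int n) m))
           (circlepath 0 (1/2))"
    by (rule has_contour_integral_eq[OF hi[unfolded dm]]) (use eq in auto)
  moreover have "gg p q n y 0 = pochhammer (of_int n) m / fact m"
    using False by (simp add: cc_def m_def)
  ultimately show ?thesis by (simp flip: pochhammer_of_real)
qed

lemma Ig_all:
  "(Ig p q n y s has_contour_integral (2 * complex_of_real pi * \<i> * complex_of_real (gg p q n y s)))
     (circlepath 0 (1/2))"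
proof (induction s arbitrary: y)
  case 0
  then show ?case by (rule Ig_base)
next
  case (Suc s)
  have h: "((\<lambda>w. complex_of_real p * Ig p q n (y-1) s w + complex_of_real q * Ig p q n y s w) has_contour_integral
     (complex_of_real p * (2 * complex_of_real pi * \<i> * complex_of_real (gg p q n (y-1) s)) +
      complex_of_real q * (2 * complex_of_real pi * \<i> * complex_of_real (gg p q n y s))))
     (circlepath 0 (1/2))"
    by (intro has_contour_integral_add has_contour_integral_lmul Suc.IH)
  have eq: "\<And>w. w \<in> path_image (circlepath 0 (1/2)) \<Longrightarrow>
     complex_of_real p * Ig p q n (y-1) s w + complex_of_real q * Ig p q n y s w = Ig p q n y (Suc s) w"
  proof -
    fix w assume "w \<in> path_image (circlepath (0::complex) (1/2))"
    then have w0: "w \<noteq> 0" by (auto simp: path_image_half)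
    have e: "w powi y = w * w powi (y-1)"
    proof -
      have "w powi y = w powi (1 + (y-1))" by simp
      also have "\<dots> = w powi 1 * w powi (y-1)" using w0 by (rule power_int_add[OF disjI1])
      finally show ?thesis by simp
    qed
    show "complex_of_real p * Ig p q n (y-1) s w + complex_of_real q * Ig p q n y s w = Ig p q n y (Suc s) w"
      unfolding Ig_def e using w0 by (simp add: field_simps)
  qed
  have "(Ig p q n y (Suc s) has_contour_integral
     (complex_of_real p * (2 * complex_of_real pi * \<i> * complex_of_real (gg p q n (y-1) s)) +
      complex_of_real q * (2 * complex_of_real pi * \<i> * complex_of_real (gg p q n y s))))
     (circlepath 0 (1/2))"
    by (rule has_contour_integral_eq[OF h eq])
  then show ?case by (simp add: algebra_simps)
qed

definition ff :: "real \<Rightarrow> real \<Rightarrow> int \<Rightarrow> int \<Rightarrow> int \<Rightarrow> real" where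
  "ff p q n y s = (if s < 0 then 0 else gg p q n y (nat s))"

lemma F_fun_ff: "F_fun p q n y s = complex_of_real (ff p q n y s)"
proof (cases "s < 0")
  case True
  then show ?thesis by (simp add: F_fun_def ff_def)
next
  case False
  have "contour_integral (circlepath 0 (1/2)) (Ig p q n y (nat s)) =
     2 * complex_of_real pi * \<i> * complex_of_real (gg p q n y (nat s))"
    by (rule contour_integral_unique[OF Ig_all])
  then show ?thesis using False by (simp add: F_fun_def ff_def Ig_def)
qed


lemma cc_rec: "cc n m = cc (n+1) m - cc (n+1) (m-1)"
proof (cases "m \<le> 0")
  case True
  then show ?thesis by (cases "m = 0") (auto simp: cc_def)
next
  case False
  define k where "k = nat m - 1"
  have k: "m = int (Suc k)" using False unfolding k_def by simp
  have m1: "m - 1 = int k" using k by simp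
  define P where "P = pochhammer (of_int n + 1 :: real) k"
  have fS: "(fact (Suc k) :: real) = of_nat (Suc k) * fact k" by (simp add: fact_Suc)
  have fk: "(fact k :: real) \<noteq> 0" by simp
  have nk: "nat m = Suc k" and mpos: "\<not> m < 0" using k by auto
  have "cc (n+1) m - cc (n+1) (m-1) =
      pochhammer (of_int n + 1) (Suc k) / fact (Suc k) - P / fact k"
    unfolding cc_def m1 P_def nk using mpos by simp
  also have "pochhammer (of_int n + 1) (Suc k) = P * (of_int n + 1 + of_nat k)"
    unfolding P_def by (simp add: pochhammer_Suc)
  also have "P / fact k = P * of_nat (Suc k) / fact (Suc k)"
    unfolding fS using fk by simp
  also have "P * (of_int n + 1 + of_nat k) / fact (Suc k) - P * of_nat (Suc k) / fact (Suc k)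
      = (P * (of_int n + 1 + of_nat k) - P * of_nat (Suc k)) / fact (Suc k)"
    by (rule diff_divide_distrib[symmetric])
  also have "P * (of_int n + 1 + of_nat k) - P * of_nat (Suc k) = of_int n * P"
    by (simp add: algebra_simps)
  also have "of_int n * P = pochhammer (of_int n) (Suc k)"
    unfolding P_def by (simp add: pochhammer_rec)
  also have "pochhammer (of_int n) (Suc k) / fact (Suc k) = cc n m" unfolding cc_def nk using mpos by simp
  finally show ?thesis by simp
qed

lemma gg_rec_n: "gg p q n y s = gg p q (n+1) y s - gg p q (n+1) (y+1) s"

proof (induction s arbitrary: y)
  case 0
  then show ?case using cc_rec[of n "-y"] by simp
next
  case (Suc s)
  have a: "gg p q n (y-1) s = gg p q (n+1) (y-1) s - gg p q (n+1) y s"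
    using Suc.IH[of "y-1"] by simp
  have b: "gg p q n y s = gg p q (n+1) y s - gg p q (n+1) (y+1) s"
    by (rule Suc.IH)
  show ?case unfolding gg.simps a b by (simp add: algebra_simps)
qed

lemma ff_rec_n: "ff p q n y s = ff p q (n+1) y s - ff p q (n+1) (y+1) s"
  unfolding ff_def using gg_rec_n[of p q n y] by simp

lemma ff_rec_t: "s \<ge> 1 \<Longrightarrow> ff p q n y s = p * ff p q n (y-1) (s-1) + q * ff p q n y (s-1)"
proof -
  assume "s \<ge> 1"
  then have "nat s = Suc (nat (s-1))" by simp
  then show ?thesis using \<open>s \<ge> 1\<close> unfolding ff_def by simp
qed

lemma ff_neg: "s < 0 \<Longrightarrow> ff p q n y s = 0"
  unfolding ff_def by simp

lemma ff_zero_pos: "y > 0 \<Longrightarrow> ff p q n y 0 = 0"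
  unfolding ff_def by (simp add: cc_def)

lemma ff_zero_0: "ff p q 0 y 0 = (if y = 0 then 1 else 0)"
  unfolding ff_def by (auto simp: cc_def pochhammer_0_left)

lemma gg_vanish: "n \<le> 0 \<Longrightarrow> y < n \<Longrightarrow> gg p q n y s = 0"
proof (induction s arbitrary: y)
  case 0
  have "pochhammer (of_int n :: real) (nat (-y)) = 0"
    unfolding pochhammer_eq_0_iff
    by (rule exI[of _ "nat (-n)"]) (use 0 in auto)
  then show ?case using 0 by (simp add: cc_def)
next
  case (Suc s)
  then show ?case by simp
qed

lemma ff_vanish: "n \<le> 0 \<Longrightarrow> y < n \<Longrightarrow> ff p q n y s = 0"
  unfolding ff_def using gg_vanish by simp


lemma mat_idx_perm: "p permutes {0..<n} \<Longrightarrow> j < n \<Longrightarrow> mat n n (\<lambda>(i,j). A i j) $$ (p j, j) = A (p j) j"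
  by (simp add: permutes_in_image)

lemma det_col_lin:
  fixes A B C :: "nat \<Rightarrow> nat \<Rightarrow> 'a::comm_ring_1"
  assumes k: "k < n"
    and colk: "\<And>i. i < n \<Longrightarrow> A i k = a * B i k + b * C i k"
    and oB: "\<And>i j. i < n \<Longrightarrow> j < n \<Longrightarrow> j \<noteq> k \<Longrightarrow> A i j = B i j"
    and oC: "\<And>i j. i < n \<Longrightarrow> j < n \<Longrightarrow> j \<noteq> k \<Longrightarrow> A i j = C i j"
  shows "det (mat n n (\<lambda>(i,j). A i j)) = a * det (mat n n (\<lambda>(i,j). B i j)) + b * det (mat n n (\<lambda>(i,j). C i j))"
proof -
  have D: "det (mat n n (\<lambda>(i,j). X i j)) = (\<Sum>p | p permutes {0..<n}. signof p * (\<Prod>j<n. X (p j) j))"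
    for X :: "nat \<Rightarrow> nat \<Rightarrow> 'a"
    by (subst det_col[of _ n]) (auto intro!: sum.cong prod.cong simp: mat_idx_perm)
  have kk: "k \<in> {..<n}" using k by simp
  have P: "signof p * (\<Prod>j<n. A (p j) j) = a * (signof p * (\<Prod>j<n. B (p j) j)) + b * (signof p * (\<Prod>j<n. C (p j) j))"
    if p: "p permutes {0..<n}" for p
  proof -
    have pl: "\<And>x. x < n \<Longrightarrow> p x < n" using permutes_in_image[OF p] by auto
    have pk: "p k < n" using pl k by simp
    have rB: "(\<Prod>j\<in>{..<n}-{k}. A (p j) j) = (\<Prod>j\<in>{..<n}-{k}. B (p j) j)"
      by (rule prod.cong) (auto intro!: oB pl)
    have rC: "(\<Prod>j\<in>{..<n}-{k}. A (p j) j) = (\<Prod>j\<in>{..<n}-{k}. C (p j) j)"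
      by (rule prod.cong) (auto intro!: oC pl)
    have "(\<Prod>j<n. A (p j) j) = A (p k) k * (\<Prod>j\<in>{..<n}-{k}. A (p j) j)"
      by (rule prod.remove[OF _ kk]) simp
    moreover have "(\<Prod>j<n. B (p j) j) = B (p k) k * (\<Prod>j\<in>{..<n}-{k}. B (p j) j)"
      by (rule prod.remove[OF _ kk]) simp
    moreover have "(\<Prod>j<n. C (p j) j) = C (p k) k * (\<Prod>j\<in>{..<n}-{k}. C (p j) j)"
      by (rule prod.remove[OF _ kk]) simp
    ultimately show ?thesis using colk[OF pk] rB rC by (simp add: algebra_simps)
  qed
  have "(\<Sum>p | p permutes {0..<n}. signof p * (\<Prod>j<n. A (p j) j)) =
     (\<Sum>p | p permutes {0..<n}. a * (signof p * (\<Prod>j<n. B (p j) j)) + b * (signof p * (\<Prod>j<n. C (p j) j)))"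
    by (rule sum.cong[OF refl]) (rule P, simp)
  then show ?thesis unfolding D by (simp only: sum.distrib sum_distrib_left)
qed

lemma det_equal_cols:
  fixes A :: "nat \<Rightarrow> nat \<Rightarrow> 'a::comm_ring_1"
  assumes "k < n" "l < n" "k \<noteq> l" "\<And>i. i < n \<Longrightarrow> A i k = A i l"
  shows "det (mat n n (\<lambda>(i,j). A i j)) = 0"
proof -
  let ?M = "mat n n (\<lambda>(i,j). A i j)"
  have "det ?M = det (transpose_mat ?M)" by (rule det_transpose[of _ n, symmetric]) simp
  also have "\<dots> = 0"
    by (rule det_identical_rows[of _ n k l]) (use assms in \<open>auto intro!: eq_vecI\<close>)
  finally show ?thesis .
qed

lemma det_zero_row:
  fixes A :: "nat \<Rightarrow> nat \<Rightarrow> 'a::comm_ring_1"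
  assumes "r < n" "\<And>j. j < n \<Longrightarrow> A r j = 0"
  shows "det (mat n n (\<lambda>(i,j). A i j)) = 0"
  by (subst laplace_expansion_row[of _ n r]) (use assms in auto)

lemma det_zero_col:
  fixes A :: "nat \<Rightarrow> nat \<Rightarrow> 'a::comm_ring_1"
  assumes "c < n" "\<And>i. i < n \<Longrightarrow> A i c = 0"
  shows "det (mat n n (\<lambda>(i,j). A i j)) = 0"
  by (subst laplace_expansion_column[of _ n c]) (use assms in auto)

lemma det_first_row:
  fixes A :: "nat \<Rightarrow> nat \<Rightarrow> 'a::comm_ring_1"
  assumes n: "0 < n" and z: "\<And>j. 0 < j \<Longrightarrow> j < n \<Longrightarrow> A 0 j = 0"
  shows "det (mat n n (\<lambda>(i,j). A i j)) = A 0 0 * det (mat (n-1) (n-1) (\<lambda>(i,j). A (Suc i) (Suc j)))"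
proof -
  let ?M = "mat n n (\<lambda>(i,j). A i j)"
  have "det ?M = (\<Sum>j<n. ?M $$ (0,j) * cofactor ?M 0 j)"
    by (rule laplace_expansion_row) (use n in auto)
  also have "\<dots> = ?M $$ (0,0) * cofactor ?M 0 0 + (\<Sum>j\<in>{..<n}-{0}. ?M $$ (0,j) * cofactor ?M 0 j)"
    by (rule sum.remove) (use n in auto)
  also have "(\<Sum>j\<in>{..<n}-{0}. ?M $$ (0,j) * cofactor ?M 0 j) = 0"
    by (rule sum.neutral) (use n z in auto)
  also have "mat_delete ?M 0 0 = mat (n-1) (n-1) (\<lambda>(i,j). A (Suc i) (Suc j))"
    unfolding mat_delete_def by (rule eq_matI) auto
  then have "cofactor ?M 0 0 = det (mat (n-1) (n-1) (\<lambda>(i,j). A (Suc i) (Suc j)))"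
    by (simp add: cofactor_def)
  finally show ?thesis using n by simp
qed


definition lp :: "int \<Rightarrow> int \<Rightarrow> int \<Rightarrow> int \<Rightarrow> int list \<Rightarrow> bool" where
  "lp a s b s' ys \<longleftrightarrow> s \<le> s' \<and> length ys = nat (s' - s) + 1 \<and>
     ys ! 0 = a \<and> ys ! nat (s' - s) = b \<and>
     (\<forall>k < nat (s' - s). ys ! (k+1) - ys ! k \<in> {0, 1})"

lemma lp_lattice: "s < s' \<Longrightarrow> lattice_path a s b s' ys = lp a s b s' ys"
  unfolding lattice_path_def lp_def by auto

lemma lp_nonempty: "lp a s b s' ys \<Longrightarrow> ys \<noteq> [] \<and> hd ys = a"
  unfolding lp_def by (cases ys) auto

lemma lp_tl:
  assumes "lp a s b s' ys" "s < s'"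
  shows "ys = a # tl ys \<and> tl ys \<noteq> [] \<and> hd (tl ys) - a \<in> {0,1} \<and> lp (hd (tl ys)) (s+1) b s' (tl ys)"
proof -
  define L where "L = nat (s' - s)"
  have L1: "L \<ge> 1" using assms(2) unfolding L_def by simp
  have len: "length ys = L + 1" and y0: "ys ! 0 = a" and yL: "ys ! L = b"
    and st: "\<And>k. k < L \<Longrightarrow> ys ! (k+1) - ys ! k \<in> {0,1}"
    using assms(1) unfolding lp_def L_def by auto
  have ne: "ys \<noteq> []" using len by auto
  have c: "ys = a # tl ys" using ne y0 by (cases ys) auto
  have tne: "tl ys \<noteq> []" using len L1 by (cases ys) auto
  have htl: "hd (tl ys) = ys ! 1" using tne by (cases ys) (auto simp: hd_conv_nth)
  have L': "nat (s' - (s+1)) = L - 1" unfolding L_def by simp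
  have "lp (hd (tl ys)) (s+1) b s' (tl ys)"
    unfolding lp_def L' using assms(2) len L1 yL st
    by (auto simp: htl nth_tl)
  moreover have "hd (tl ys) - a \<in> {0,1}" using st[of 0] L1 y0 htl by simp
  ultimately show ?thesis using c tne by blast
qed

lemma lp_cons:
  assumes "lp a' (s+1) b s' ys'" "a' - a \<in> {0,1}"
  shows "lp a s b s' (a # ys')"
proof -
  define L where "L = nat (s' - (s+1))"
  have len: "length ys' = L + 1" and y0: "ys' ! 0 = a'" and yL: "ys' ! L = b"
    and st: "\<And>k. k < L \<Longrightarrow> ys' ! (k+1) - ys' ! k \<in> {0,1}" and le: "s + 1 \<le> s'"
    using assms(1) unfolding lp_def L_def by auto
  have L': "nat (s' - s) = Suc L" unfolding L_def using le by simp
  have st': "(a # ys') ! (k+1) - (a # ys') ! k \<in> {0,1}" if "k < Suc L" for k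
  proof (cases k)
    case 0
    then show ?thesis using assms(2) y0 by simp
  next
    case (Suc k')
    then show ?thesis using st[of k'] that by simp
  qed
  show ?thesis unfolding lp_def L' using le len yL st' by auto
qed

lemma lp_zero: "lp a s b s ys \<longleftrightarrow> ys = [a] \<and> a = b"
  unfolding lp_def by (cases ys) auto

lemma lp_bounds:
  assumes "lp a s b s' ys"
  shows "set ys \<subseteq> {a .. a + (s' - s)}"
proof -
  define L where "L = nat (s' - s)"
  have len: "length ys = L + 1" and y0: "ys ! 0 = a"
    and st: "\<And>k. k < L \<Longrightarrow> ys ! (k+1) - ys ! k \<in> {0,1}" and le: "s \<le> s'"
    using assms unfolding lp_def L_def by auto
  have b: "a \<le> ys ! k \<and> ys ! k \<le> a + int k" if "k \<le> L" for k
    using that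
  proof (induction k)
    case 0
    then show ?case using y0 by simp
  next
    case (Suc k)
    then show ?case using st[of k] by auto
  qed
  show ?thesis
  proof
    fix z assume "z \<in> set ys"
    then obtain k where k: "k < length ys" "z = ys ! k" by (auto simp: in_set_conv_nth)
    then have "k \<le> L" using len by simp
    then show "z \<in> {a .. a + (s' - s)}" using b[of k] k le unfolding L_def by auto
  qed
qed

lemma lp_finite: "finite {ys. lp a s b s' ys}"
proof (rule finite_subset)
  show "{ys. lp a s b s' ys} \<subseteq> {ys. set ys \<subseteq> {a .. a + (s' - s)} \<and> length ys = nat (s' - s) + 1}"
    using lp_bounds by (auto simp: lp_def)
  show "finite {ys. set ys \<subseteq> {a .. a + (s' - s)} \<and> length ys = nat (s' - s) + 1}"
    by (rule finite_lists_length_eq) simp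
qed

definition NP :: "nat \<Rightarrow> (nat \<Rightarrow> int) \<Rightarrow> (nat \<Rightarrow> int) \<Rightarrow> (nat \<Rightarrow> int) \<Rightarrow> (nat \<Rightarrow> int)
    \<Rightarrow> (nat \<Rightarrow> int list) set" where
  "NP N x t x0 t0 = {P. (\<forall>i\<in>{1..N}. lp (x0 i) (t0 i) (x i) (t i) (P i)) \<and>
                            (\<forall>i. i \<notin> {1..N} \<longrightarrow> P i = [])}"

definition GG :: "real \<Rightarrow> real \<Rightarrow> nat \<Rightarrow> (nat \<Rightarrow> int) \<Rightarrow> (nat \<Rightarrow> int) \<Rightarrow> (nat \<Rightarrow> int) \<Rightarrow> (nat \<Rightarrow> int) \<Rightarrow> real" where
  "GG p q N x t x0 t0 = (\<Sum>P\<in>NP N x t x0 t0. N_path_weight p q N t0 P)"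

lemma green_GG: "\<forall>i\<in>{1..N}. t0 i < t i \<Longrightarrow> green p q N x t x0 t0 = GG p q N x t x0 t0"
proof -
  assume a: "\<forall>i\<in>{1..N}. t0 i < t i"
  have "N_paths N x t x0 t0 = NP N x t x0 t0"
    unfolding N_paths_def NP_def using a lp_lattice by auto
  then show ?thesis unfolding green_def GG_def by simp
qed

lemma NP_finite: "finite (NP N x t x0 t0)"
proof -
  let ?L = "\<lambda>i. {ys. lp (x0 i) (t0 i) (x i) (t i) ys}"
  let ?e = "\<lambda>f i. if i \<in> {1..N} then f i else ([]::int list)"
  have "NP N x t x0 t0 \<subseteq> ?e ` (PiE {1..N} ?L)"
  proof
    fix P assume P: "P \<in> NP N x t x0 t0"
    have "P = ?e (restrict P {1..N})" using P unfolding NP_def by (auto simp: fun_eq_iff)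
    moreover have "restrict P {1..N} \<in> PiE {1..N} ?L" using P unfolding NP_def by auto
    ultimately show "P \<in> ?e ` (PiE {1..N} ?L)" by blast
  qed
  moreover have "finite (?e ` (PiE {1..N} ?L))"
    by (intro finite_imageI finite_PiE) (auto simp: lp_finite)
  ultimately show ?thesis by (rule finite_subset)
qed

lemma pp_cons: "path_points s (a # ys) = insert (a, s) (path_points (s+1) ys)"
proof -
  have "z \<in> path_points s (a # ys) \<longleftrightarrow> z \<in> insert (a, s) (path_points (s+1) ys)" for z
  proof
    assume "z \<in> path_points s (a # ys)"
    then obtain k where k: "k < Suc (length ys)" "z = ((a#ys) ! k, s + int k)"
      unfolding path_points_def by auto
    then show "z \<in> insert (a, s) (path_points (s+1) ys)"
      unfolding path_points_def by (cases k) auto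
  next
    assume "z \<in> insert (a, s) (path_points (s+1) ys)"
    then show "z \<in> path_points s (a # ys)"
    proof
      assume "z = (a, s)" then show ?thesis unfolding path_points_def by (intro CollectI exI[of _ 0]) auto
    next
      assume "z \<in> path_points (s+1) ys"
      then obtain k where "k < length ys" "z = (ys ! k, s + 1 + int k)" unfolding path_points_def by blast
      then show ?thesis unfolding path_points_def by (intro CollectI exI[of _ "Suc k"]) auto
    qed
  qed
  then show ?thesis by blast
qed

lemma pp_time: "z \<in> path_points s ys \<Longrightarrow> s \<le> snd z \<and> snd z \<le> s + int (length ys) - 1"
  unfolding path_points_def by auto

lemma pp_start: "ys \<noteq> [] \<Longrightarrow> (a, s) \<in> path_points s ys \<longleftrightarrow> a = ys ! 0"
  unfolding path_points_def by auto

lemma W_first_cons: "W_first p q (a # y # ys) = (if y = a + 1 then p else q) * W_first p q (y # ys)"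
proof -
  define g where "g = (\<lambda>k. if (a # y # ys) ! (k+1) = (a # y # ys) ! k + 1 then p else q)"
  have "W_first p q (a # y # ys) = (\<Prod>k<Suc (length ys). g k)"
    unfolding W_first_def g_def by simp
  also have "\<dots> = g 0 * (\<Prod>k<length ys. g (Suc k))"
    by (rule prod.lessThan_Suc_shift)
  also have "(\<Prod>k<length ys. g (Suc k)) = W_first p q (y # ys)"
    unfolding W_first_def g_def by simp
  finally show ?thesis unfolding g_def by simp
qed

lemma W_cond_cons: "W_cond p q s (a # y # ys) s0 zs =
   (if (a + 1, s + 1) \<in> path_points s0 zs then (if y = a + 1 then 0 else 1) else (if y = a + 1 then p else q))
   * W_cond p q (s+1) (y # ys) s0 zs"
proof -
  define g where "g = (\<lambda>k. (if ((a # y # ys) ! k + 1, s + int k + 1) \<in> path_points s0 zs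
      then (if (a # y # ys) ! (k+1) = (a # y # ys) ! k + 1 then 0 else 1)
      else (if (a # y # ys) ! (k+1) = (a # y # ys) ! k + 1 then p else q)))"
  have "W_cond p q s (a # y # ys) s0 zs = (\<Prod>k<Suc (length ys). g k)"
    unfolding W_cond_def g_def by simp
  also have "\<dots> = g 0 * (\<Prod>k<length ys. g (Suc k))"
    by (rule prod.lessThan_Suc_shift)
  also have "(\<Prod>k<length ys. g (Suc k)) = W_cond p q (s+1) (y # ys) s0 zs"
    unfolding W_cond_def g_def
  proof (intro prod.cong refl)
    fix x
    have e1: "(a # y # ys) ! Suc x = (y # ys) ! x" by simp
    have e2: "(a # y # ys) ! (Suc x + 1) = (y # ys) ! (x + 1)" by simp
    have e3: "s + int (Suc x) + 1 = s + 1 + int x + 1" by simp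
    show "(if ((a # y # ys) ! Suc x + 1, s + int (Suc x) + 1) \<in> path_points s0 zs
          then if (a # y # ys) ! (Suc x + 1) = (a # y # ys) ! Suc x + 1 then 0 else 1
          else if (a # y # ys) ! (Suc x + 1) = (a # y # ys) ! Suc x + 1 then p else q) =
         (if ((y # ys) ! x + 1, s + 1 + int x + 1) \<in> path_points s0 zs
          then if (y # ys) ! (x + 1) = (y # ys) ! x + 1 then 0 else 1
          else if (y # ys) ! (x + 1) = (y # ys) ! x + 1 then p else q)"
      by (simp only: e1 e2 e3)
  qed simp
  finally show ?thesis unfolding g_def by simp
qed

lemma W_cond_cong:
  assumes "\<And>z. snd z > s \<Longrightarrow> (z \<in> path_points s0 zs \<longleftrightarrow> z \<in> path_points s0' zs')"
  shows "W_cond p q s ys s0 zs = W_cond p q s ys s0' zs'"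
  unfolding W_cond_def by (rule prod.cong[OF refl]) (simp add: assms)

lemma W_cond_free:
  assumes "\<And>z. z \<in> path_points s0 zs \<Longrightarrow> snd z \<le> s"
  shows "W_cond p q s ys s0 zs = W_first p q ys"
  unfolding W_cond_def W_first_def
  by (rule prod.cong[OF refl]) (use assms in force)

lemma W_first_single: "W_first p q [a] = 1" and W_first_nil: "W_first p q [] = 1"
  unfolding W_first_def by simp_all


lemma weight_factor:
  fixes N k :: nat and x t x0 t0 :: "nat \<Rightarrow> int" and d :: int and p q :: real
  assumes P: "P \<in> NP N x t x0 t0"
    and k: "k \<in> {1..N}" and tk: "t0 k < t k"
    and R: "k < N \<Longrightarrow> t0 k \<le> t0 (k+1)"
    and L: "1 < k \<Longrightarrow> t0 (k-1) = t0 k + 1"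
    and d: "d \<in> {0,1}" and hd: "hd (tl (P k)) = x0 k + d"
  defines "\<beta> \<equiv> (1 < k \<and> x0 (k-1) = x0 k + 1)"
  defines "\<phi> \<equiv> (if d = 1 then (if \<beta> then 0 else p) else (if \<beta> then 1 else q))"
  shows "N_path_weight p q N t0 P = \<phi> * N_path_weight p q N (t0(k := t0 k + 1)) (P(k := tl (P k)))"
proof -
  define P' where "P' = P(k := tl (P k))"
  define t0' where "t0' = t0(k := t0 k + 1)"
  have lk: "lp (x0 k) (t0 k) (x k) (t k) (P k)" using P k unfolding NP_def by auto
  from lp_tl[OF lk tk] have Pk: "P k = x0 k # tl (P k)" and tne: "tl (P k) \<noteq> []" by auto
  define y where "y = hd (tl (P k))"
  define rest where "rest = tl (tl (P k))"
  have Pk2: "P k = x0 k # y # rest" using Pk tne unfolding y_def rest_def by (cases "tl (P k)") auto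
  have tlk: "tl (P k) = y # rest" using Pk2 by simp
  have yd: "(y = x0 k + 1) \<longleftrightarrow> d = 1" using hd d unfolding y_def by auto
  define T where "T = (\<lambda>(P::nat \<Rightarrow> int list) (t0::nat \<Rightarrow> int) i. W_cond p q (t0 (i+1)) (P (i+1)) (t0 i) (P i))"
  have NPW: "N_path_weight p q N t0'' P'' = W_first p q (P'' 1) * (\<Prod>i\<in>{1..<N}. T P'' t0'' i)" for P'' t0''
    unfolding N_path_weight_def T_def by simp
  have Ti: "T P t0 i = (if i = k - 1 then \<phi> else 1) * T P' t0' i" if i: "i \<in> {1..<N}" for i
  proof (cases "i = k - 1")
    case True
    then have k1: "1 < k" and ik: "i + 1 = k" using i k by auto
    have Lk: "t0 (k-1) = t0 k + 1" using L[OF k1] .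
    have km: "k - 1 \<in> {1..N}" "k - 1 \<noteq> k" using k1 k by auto
    have lkm: "lp (x0 (k-1)) (t0 (k-1)) (x (k-1)) (t (k-1)) (P (k-1))" using P km unfolding NP_def by auto
    have ne: "P (k-1) \<noteq> []" and h0: "P (k-1) ! 0 = x0 (k-1)" using lp_nonempty[OF lkm] lkm
      unfolding lp_def by auto
    have mem: "(x0 k + 1, t0 k + 1) \<in> path_points (t0 (k-1)) (P (k-1)) \<longleftrightarrow> \<beta>"
      unfolding Lk using pp_start[OF ne[unfolded Lk[symmetric]]] h0 k1 unfolding \<beta>_def Lk by auto
    have "T P t0 i = W_cond p q (t0 k) (P k) (t0 (k-1)) (P (k-1))"
      unfolding T_def using ik True by simp
    also have "\<dots> = (if (x0 k + 1, t0 k + 1) \<in> path_points (t0 (k-1)) (P (k-1))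
        then (if y = x0 k + 1 then 0 else 1) else (if y = x0 k + 1 then p else q))
        * W_cond p q (t0 k + 1) (y # rest) (t0 (k-1)) (P (k-1))"
      unfolding Pk2 by (rule W_cond_cons)
    also have "(if (x0 k + 1, t0 k + 1) \<in> path_points (t0 (k-1)) (P (k-1))
        then (if y = x0 k + 1 then 0 else 1) else (if y = x0 k + 1 then p else q)) = \<phi>"
      unfolding mem \<phi>_def yd by auto
    also have "W_cond p q (t0 k + 1) (y # rest) (t0 (k-1)) (P (k-1)) = T P' t0' i"
      unfolding T_def P'_def t0'_def using ik km(2) tlk True by simp
    finally show ?thesis using True by simp
  next
    case False
    show ?thesis
    proof (cases "i = k")
      case True
      then have kN: "k < N" using i by auto
      have "T P t0 i = W_cond p q (t0 (k+1)) (P (k+1)) (t0 k) (P k)" unfolding T_def True by simp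
      also have "\<dots> = W_cond p q (t0 (k+1)) (P (k+1)) (t0 k + 1) (tl (P k))"
      proof (rule W_cond_cong)
        fix z :: "int \<times> int" assume z: "snd z > t0 (k+1)"
        then have "z \<noteq> (x0 k, t0 k)" using R[OF kN] by auto
        then show "z \<in> path_points (t0 k) (P k) \<longleftrightarrow> z \<in> path_points (t0 k + 1) (tl (P k))"
          by (subst Pk) (simp add: pp_cons)
      qed
      also have "\<dots> = T P' t0' i" unfolding T_def P'_def t0'_def True by simp
      finally show ?thesis using False by simp
    next
      case False2: False
      have "i + 1 \<noteq> k" using False i by auto
      then show ?thesis using False False2 unfolding T_def P'_def t0'_def by simp
    qed
  qed
  have prodT: "(\<Prod>i\<in>{1..<N}. T P t0 i) = (if 1 < k then \<phi> else 1) * (\<Prod>i\<in>{1..<N}. T P' t0' i)"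
  proof -
    have "(\<Prod>i\<in>{1..<N}. T P t0 i) = (\<Prod>i\<in>{1..<N}. (if i = k - 1 then \<phi> else 1) * T P' t0' i)"
      by (rule prod.cong[OF refl]) (rule Ti)
    also have "\<dots> = (\<Prod>i\<in>{1..<N}. (if i = k - 1 then \<phi> else 1)) * (\<Prod>i\<in>{1..<N}. T P' t0' i)"
      by (rule prod.distrib)
    also have "(\<Prod>i\<in>{1..<N}. (if i = k - 1 then \<phi> else 1)) = (if 1 < k then \<phi> else 1)"
      using k by (subst prod.delta) auto
    finally show ?thesis .
  qed
  have "N_path_weight p q N t0 P = \<phi> * N_path_weight p q N t0' P'"
  proof (cases "k = 1")
    case True
    have "W_first p q (P 1) = (if y = x0 k + 1 then p else q) * W_first p q (y # rest)"
      using Pk2 True by (simp add: W_first_cons)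
    also have "(if y = x0 k + 1 then p else q) = \<phi>" unfolding \<phi>_def \<beta>_def yd using True by auto
    also have "W_first p q (y # rest) = W_first p q (P' 1)" unfolding P'_def using True tlk by simp
    finally have "W_first p q (P 1) = \<phi> * W_first p q (P' 1)" .
    then show ?thesis unfolding NPW[of t0 P] NPW[of t0' P'] prodT using True by simp
  next
    case False
    then have "1 < k" using k by auto
    moreover have "P' 1 = P 1" unfolding P'_def using False by simp
    ultimately show ?thesis unfolding NPW[of t0 P] NPW[of t0' P'] prodT by simp
  qed
  then show ?thesis unfolding P'_def t0'_def .
qed

lemma sum_part:
  fixes N k :: nat and x t x0 t0 :: "nat \<Rightarrow> int" and d :: int and p q :: real
  assumes k: "k \<in> {1..N}" and tk: "t0 k < t k"
    and R: "k < N \<Longrightarrow> t0 k \<le> t0 (k+1)"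
    and L: "1 < k \<Longrightarrow> t0 (k-1) = t0 k + 1"
    and d: "d \<in> {0,1}"
  defines "\<beta> \<equiv> (1 < k \<and> x0 (k-1) = x0 k + 1)"
  defines "\<phi> \<equiv> (if d = 1 then (if \<beta> then 0 else p) else (if \<beta> then 1 else q))"
  shows "(\<Sum>P\<in>{P \<in> NP N x t x0 t0. hd (tl (P k)) = x0 k + d}. N_path_weight p q N t0 P)
     = \<phi> * GG p q N x t (x0(k := x0 k + d)) (t0(k := t0 k + 1))"
proof -
  let ?S = "{P \<in> NP N x t x0 t0. hd (tl (P k)) = x0 k + d}"
  let ?T = "NP N x t (x0(k := x0 k + d)) (t0(k := t0 k + 1))"
  let ?j = "\<lambda>P. P(k := tl (P k))"
  let ?i = "\<lambda>P'. P'(k := x0 k # P' k)"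
  have "(\<Sum>P\<in>?S. N_path_weight p q N t0 P) = (\<Sum>P'\<in>?T. \<phi> * N_path_weight p q N (t0(k := t0 k + 1)) P')"
  proof (rule sum.reindex_bij_witness[of _ ?i ?j])
    fix P assume P: "P \<in> ?S"
    have lk: "lp (x0 k) (t0 k) (x k) (t k) (P k)" using P k unfolding NP_def by auto
    from lp_tl[OF lk tk] have Pk: "P k = x0 k # tl (P k)"
      and ltl: "lp (hd (tl (P k))) (t0 k + 1) (x k) (t k) (tl (P k))" by auto
    show "?i (?j P) = P" using Pk by (auto simp: fun_eq_iff)
    show "?j P \<in> ?T" using P ltl k unfolding NP_def by auto
    show "\<phi> * N_path_weight p q N (t0(k := t0 k + 1)) (?j P) = N_path_weight p q N t0 P"
      using weight_factor[of P N x t x0 t0 k d, OF _ k tk R L d] P unfolding \<phi>_def \<beta>_def by auto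
  next
    fix P' assume P': "P' \<in> ?T"
    have "lp ((x0(k := x0 k + d)) k) ((t0(k := t0 k + 1)) k) (x k) (t k) (P' k)"
      using P' k unfolding NP_def by blast
    then have lk: "lp (x0 k + d) (t0 k + 1) (x k) (t k) (P' k)" by simp
    have ne: "P' k \<noteq> []" "hd (P' k) = x0 k + d" using lp_nonempty[OF lk] by auto
    have lc: "lp (x0 k) (t0 k) (x k) (t k) (x0 k # P' k)"
      by (rule lp_cons[OF lk]) (use d in auto)
    show "?j (?i P') = P'" by (auto simp: fun_eq_iff)
    show "?i P' \<in> ?S" using P' lc k ne unfolding NP_def by auto
  qed
  also have "\<dots> = \<phi> * GG p q N x t (x0(k := x0 k + d)) (t0(k := t0 k + 1))"
    unfolding GG_def by (simp add: sum_distrib_left)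
  finally show ?thesis .
qed

lemma GG_step:
  fixes N k :: nat and x t x0 t0 :: "nat \<Rightarrow> int" and p q :: real
  assumes k: "k \<in> {1..N}" and tk: "t0 k < t k"
    and R: "k < N \<Longrightarrow> t0 k \<le> t0 (k+1)"
    and L: "1 < k \<Longrightarrow> t0 (k-1) = t0 k + 1"
  defines "\<beta> \<equiv> (1 < k \<and> x0 (k-1) = x0 k + 1)"
  shows "GG p q N x t x0 t0 = (if \<beta> then 0 else p) * GG p q N x t (x0(k := x0 k + 1)) (t0(k := t0 k + 1))
                            + (if \<beta> then 1 else q) * GG p q N x t x0 (t0(k := t0 k + 1))"
proof -
  let ?S = "NP N x t x0 t0"
  let ?A = "\<lambda>d. {P \<in> ?S. hd (tl (P k)) = x0 k + d}"
  have split: "?S = ?A 1 \<union> ?A 0"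
  proof -
    have "hd (tl (P k)) - x0 k \<in> {0,1}" if "P \<in> ?S" for P
    proof -
      have "lp (x0 k) (t0 k) (x k) (t k) (P k)" using that k unfolding NP_def by auto
      then show ?thesis using lp_tl tk by blast
    qed
    then show ?thesis by force
  qed
  have fin: "finite (?A d)" for d by (rule finite_subset[OF _ NP_finite]) auto
  have "GG p q N x t x0 t0 = (\<Sum>P\<in>?A 1. N_path_weight p q N t0 P) + (\<Sum>P\<in>?A 0. N_path_weight p q N t0 P)"
    unfolding GG_def by (subst split, rule sum.union_disjoint) (use fin[of 0] fin[of 1] in auto)
  also have "(\<Sum>P\<in>?A 1. N_path_weight p q N t0 P) = (if \<beta> then 0 else p) * GG p q N x t (x0(k := x0 k + 1)) (t0(k := t0 k + 1))"
    using sum_part[where N=N and k=k and x=x and t=t and x0=x0 and t0=t0 and d=1 and p=p and q=q] k tk R L unfolding \<beta>_def by simp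
  also have "(\<Sum>P\<in>?A 0. N_path_weight p q N t0 P) = (if \<beta> then 1 else q) * GG p q N x t x0 (t0(k := t0 k + 1))"
    using sum_part[where N=N and k=k and x=x and t=t and x0=x0 and t0=t0 and d=0 and p=p and q=q] k tk R L unfolding \<beta>_def by simp
  finally show ?thesis .
qed

lemma GG_shift:
  fixes N :: nat and x t x0 t0 :: "nat \<Rightarrow> int" and p q :: real
  assumes N: "1 \<le> N" and t1: "t0 1 = t 1" and tj: "\<forall>j\<in>{2..N}. t 1 \<le> t0 j"
  shows "GG p q N x t x0 t0 = (if x 1 = x0 1 then
     GG p q (N-1) (\<lambda>i. x (Suc i)) (\<lambda>i. t (Suc i)) (\<lambda>i. x0 (Suc i)) (\<lambda>i. t0 (Suc i)) else 0)"
proof (cases "x 1 = x0 1")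
  case False
  have "NP N x t x0 t0 = {}"
  proof (rule ccontr)
    assume "NP N x t x0 t0 \<noteq> {}"
    then obtain P where "P \<in> NP N x t x0 t0" by blast
    then have "lp (x0 1) (t0 1) (x 1) (t 1) (P 1)" using N unfolding NP_def by auto
    then show False using False t1 lp_zero by (metis)
  qed
  then show ?thesis using False unfolding GG_def by simp
next
  case True
  let ?S = "NP N x t x0 t0"
  let ?T = "NP (N-1) (\<lambda>i. x (Suc i)) (\<lambda>i. t (Suc i)) (\<lambda>i. x0 (Suc i)) (\<lambda>i. t0 (Suc i))"
  let ?j = "\<lambda>P. (\<lambda>i. if i = 0 then [] else P (Suc i))"
  let ?i = "\<lambda>P'. (\<lambda>i. if i = 0 then [] else if i = 1 then [x0 1] else P' (i - 1))"
  have P1: "P 1 = [x0 1]" if "P \<in> ?S" for P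
  proof -
    have "lp (x0 1) (t0 1) (x 1) (t 1) (P 1)" using that N unfolding NP_def by auto
    then show ?thesis using t1 lp_zero by metis
  qed
  have "(\<Sum>P\<in>?S. N_path_weight p q N t0 P) = (\<Sum>P'\<in>?T. N_path_weight p q (N-1) (\<lambda>i. t0 (Suc i)) P')"
  proof (rule sum.reindex_bij_witness[of _ ?i ?j])
    fix P assume P: "P \<in> ?S"
    have P0: "P 0 = []" using P unfolding NP_def by auto
    show "?i (?j P) = P"
    proof
      fix i show "?i (?j P) i = P i" using P0 P1[OF P] by (cases i) auto
    qed
    show "?j P \<in> ?T"
    proof -
      have "\<forall>i\<in>{1..N-1}. lp (x0 (Suc i)) (t0 (Suc i)) (x (Suc i)) (t (Suc i)) (P (Suc i))"
        using P unfolding NP_def by auto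
      moreover have "\<forall>i. i \<notin> {1..N-1} \<longrightarrow> ?j P i = []"
        using P unfolding NP_def by auto
      ultimately show ?thesis unfolding NP_def by auto
    qed
    show "N_path_weight p q (N-1) (\<lambda>i. t0 (Suc i)) (?j P) = N_path_weight p q N t0 P"
    proof (cases "N = 1")
      case True
      have "P 2 = []" using P True unfolding NP_def by auto
      then show ?thesis using True P1[OF P] unfolding N_path_weight_def
        by (simp add: W_first_single W_first_nil numeral_2_eq_2)
    next
      case False
      then have N2: "2 \<le> N" using N by simp
      have T1: "W_cond p q (t0 2) (P 2) (t0 1) (P 1) = W_first p q (P 2)"
      proof (rule W_cond_free)
        fix z assume "z \<in> path_points (t0 1) (P 1)"
        then have "snd z = t0 1" using P1[OF P] unfolding path_points_def by auto
        then show "snd z \<le> t0 2" using tj N2 t1 by auto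
      qed
      have "N_path_weight p q N t0 P = W_first p q (P 1) *
          (W_cond p q (t0 2) (P 2) (t0 1) (P 1) *
           (\<Prod>i\<in>{2..<N}. W_cond p q (t0 (i+1)) (P (i+1)) (t0 i) (P i)))"
      proof -
        have "{1..<N} = insert 1 {2..<N}" using N2 by auto
        then show ?thesis unfolding N_path_weight_def by (simp add: numeral_2_eq_2)
      qed
      also have "(\<Prod>i\<in>{2..<N}. W_cond p q (t0 (i+1)) (P (i+1)) (t0 i) (P i)) =
          (\<Prod>i\<in>{1..<N-1}. W_cond p q (t0 (Suc i+1)) (P (Suc i+1)) (t0 (Suc i)) (P (Suc i)))"
      proof -
        have e: "{2..<N} = Suc ` {1..<N-1}" using N2 by (auto simp: image_iff)
        show ?thesis by (rule prod.reindex_cong[where l=Suc]) (use e in auto)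
      qed
      finally show ?thesis unfolding N_path_weight_def T1 using P1[OF P]
        by (simp add: W_first_single numeral_2_eq_2)
    qed
  next
    fix P' assume P': "P' \<in> ?T"
    have P'0: "P' 0 = []" using P' unfolding NP_def by auto
    show "?j (?i P') = P'"
    proof
      fix i show "?j (?i P') i = P' i" using P'0 by (cases i) auto
    qed
    show "?i P' \<in> ?S"
    proof -
      have "lp (x0 1) (t0 1) (x 1) (t 1) [x0 1]" using True t1 lp_zero by metis
      moreover have "lp (x0 i) (t0 i) (x i) (t i) (P' (i-1))" if "i \<in> {2..N}" for i
      proof -
        have "i - 1 \<in> {1..N-1}" using that by auto
        then have "lp (x0 (Suc (i-1))) (t0 (Suc (i-1))) (x (Suc (i-1))) (t (Suc (i-1))) (P' (i-1))"
          using P' unfolding NP_def by auto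
        then show ?thesis using that by simp
      qed
      moreover have "P' (i - 1) = []" if "i \<noteq> 0" "i \<noteq> 1" "i \<notin> {1..N}" for i
      proof -
        have "i - 1 \<notin> {1..N-1}" using that N by auto
        then show ?thesis using P' unfolding NP_def by blast
      qed
      ultimately show ?thesis unfolding NP_def using N by auto
    qed
  qed
  then show ?thesis using True unfolding GG_def by simp
qed


definition DD :: "real \<Rightarrow> real \<Rightarrow> nat \<Rightarrow> (nat \<Rightarrow> int) \<Rightarrow> (nat \<Rightarrow> int) \<Rightarrow> (nat \<Rightarrow> int) \<Rightarrow> (nat \<Rightarrow> int) \<Rightarrow> real" where
  "DD p q N x t x0 t0 = det (mat N N (\<lambda>(i,j). ff p q (int j - int i) (x (i+1) - x0 (j+1)) (t (i+1) - t0 (j+1))))"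

lemma DD_step:
  fixes N k :: nat and x t x0 t0 :: "nat \<Rightarrow> int" and p q :: real
  assumes pq: "p + q = 1" and k: "k \<in> {1..N}" and tk: "\<forall>i\<in>{1..N}. t0 k < t i"
    and L: "1 < k \<Longrightarrow> x0 (k-1) = x0 k + 1 \<Longrightarrow> t0 (k-1) = t0 k + 1"
  defines "\<beta> \<equiv> (1 < k \<and> x0 (k-1) = x0 k + 1)"
  shows "DD p q N x t x0 t0 = (if \<beta> then 0 else p) * DD p q N x t (x0(k := x0 k + 1)) (t0(k := t0 k + 1))
                            + (if \<beta> then 1 else q) * DD p q N x t x0 (t0(k := t0 k + 1))"
proof -
  define c where "c = k - 1"
  have c: "c < N" "Suc c = k" using k unfolding c_def by auto
  define A where "A = (\<lambda>i j. ff p q (int j - int i) (x (i+1) - x0 (j+1)) (t (i+1) - t0 (j+1)))"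
  define B where "B = (\<lambda>i j. ff p q (int j - int i) (x (i+1) - (x0(k := x0 k + 1)) (j+1)) (t (i+1) - (t0(k := t0 k + 1)) (j+1)))"
  define C where "C = (\<lambda>i j. ff p q (int j - int i) (x (i+1) - x0 (j+1)) (t (i+1) - (t0(k := t0 k + 1)) (j+1)))"
  have DA: "DD p q N x t x0 t0 = det (mat N N (\<lambda>(i,j). A i j))" unfolding DD_def A_def by simp
  have DB: "DD p q N x t (x0(k := x0 k + 1)) (t0(k := t0 k + 1)) = det (mat N N (\<lambda>(i,j). B i j))"
    unfolding DD_def B_def by simp
  have DC: "DD p q N x t x0 (t0(k := t0 k + 1)) = det (mat N N (\<lambda>(i,j). C i j))"
    unfolding DD_def C_def by simp
  have colA: "A i c = p * B i c + q * C i c" if "i < N" for i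
  proof -
    have "t0 k < t (i+1)" using tk that by auto
    then have "ff p q (int c - int i) (x (i+1) - x0 k) (t (i+1) - t0 k) =
      p * ff p q (int c - int i) (x (i+1) - x0 k - 1) (t (i+1) - t0 k - 1) +
      q * ff p q (int c - int i) (x (i+1) - x0 k) (t (i+1) - t0 k - 1)"
      by (subst ff_rec_t) (auto simp: algebra_simps)
    then show ?thesis unfolding A_def B_def C_def using c by (simp add: algebra_simps)
  qed
  have oB: "A i j = B i j" if "j \<noteq> c" for i j
  proof -
    have "j + 1 \<noteq> k" using that c by auto
    then show ?thesis unfolding A_def B_def by simp
  qed
  have oC: "A i j = C i j" if "j \<noteq> c" for i j
  proof -
    have "j + 1 \<noteq> k" using that c by auto
    then show ?thesis unfolding A_def C_def by simp
  qed
  have lin: "DD p q N x t x0 t0 = p * DD p q N x t (x0(k := x0 k + 1)) (t0(k := t0 k + 1))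
                            + q * DD p q N x t x0 (t0(k := t0 k + 1))"
    unfolding DA DB DC by (rule det_col_lin[OF c(1)]) (auto intro: colA oB oC)
  show ?thesis
  proof (cases \<beta>)
    case False
    then show ?thesis using lin by simp
  next
    case True
    then have k1: "1 < k" and xk: "x0 (k-1) = x0 k + 1" unfolding \<beta>_def by auto
    have tk1: "t0 (k-1) = t0 k + 1" using L[OF k1 xk] .
    have c1: "c - 1 < N" "c - 1 \<noteq> c" "Suc (c - 1) = k - 1" using c k1 by auto
    define E where "E = (\<lambda>i j. if j = c then C i (c - 1) else C i j)"
    have colB: "B i c = 1 * E i c + 1 * C i c" if "i < N" for i
    proof -
      have km: "k - 1 \<noteq> k" using k1 by simp
      have e1: "c - 1 + 1 = k - 1" using c1 by simp
      have e2: "int (c - 1) = int c - 1" using c1 c k1 by auto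
      have "C i (c - 1) = ff p q (int (c-1) - int i) (x (i+1) - x0 (k-1)) (t (i+1) - (t0(k := t0 k + 1)) (k-1))"
        unfolding C_def e1 ..
      also have "\<dots> = ff p q (int c - int i - 1) (x (i+1) - x0 k - 1) (t (i+1) - t0 k - 1)"
        using km tk1 unfolding e2 xk by (simp add: algebra_simps)
      finally have "C i (c - 1) = ff p q (int c - int i - 1) (x (i+1) - x0 k - 1) (t (i+1) - t0 k - 1)" .
      moreover have "B i c = ff p q (int c - int i) (x (i+1) - x0 k - 1) (t (i+1) - t0 k - 1)"
        unfolding B_def using c by (simp add: algebra_simps)
      moreover have "C i c = ff p q (int c - int i) (x (i+1) - x0 k - 1 + 1) (t (i+1) - t0 k - 1)"
        unfolding C_def using c by (simp add: algebra_simps)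
      ultimately show ?thesis unfolding E_def
        using ff_rec_n[of p q "int c - int i - 1" "x (i+1) - x0 k - 1" "t (i+1) - t0 k - 1"] by simp
    qed
    have "det (mat N N (\<lambda>(i,j). B i j)) = 1 * det (mat N N (\<lambda>(i,j). E i j)) + 1 * det (mat N N (\<lambda>(i,j). C i j))"
    proof (rule det_col_lin[OF c(1)])
      show "B i c = 1 * E i c + 1 * C i c" if "i < N" for i using colB that .
      show "B i j = E i j" if "j \<noteq> c" for i j using oB[OF that] oC[OF that] that by (simp add: E_def)
      show "B i j = C i j" if "j \<noteq> c" for i j using oB[OF that] oC[OF that] by simp
    qed
    also have "det (mat N N (\<lambda>(i,j). E i j)) = 0"
      by (rule det_equal_cols[OF c(1) c1(1) c1(2)[symmetric]]) (auto simp: E_def)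
    finally have "DD p q N x t (x0(k := x0 k + 1)) (t0(k := t0 k + 1)) = DD p q N x t x0 (t0(k := t0 k + 1))"
      unfolding DB DC by simp
    then show ?thesis using lin True pq by (simp add: algebra_simps flip: distrib_right)
  qed
qed

lemma dec_chain:
  fixes x :: "nat \<Rightarrow> int"
  assumes "\<forall>i\<in>{1..<N}. x (i+1) < x i" "1 \<le> i" "i \<le> j" "j \<le> N"
  shows "x j \<le> x i - int (j - i)"
  using assms(3,4)
proof (induction j)
  case 0
  then show ?case by simp
next
  case (Suc j)
  show ?case
  proof (cases "i = Suc j")
    case True
    then show ?thesis by simp
  next
    case False
    then have "i \<le> j" using Suc.prems by simp
    then have ih: "x j \<le> x i - int (j - i)" using Suc by simp
    have "j \<in> {1..<N}" using \<open>i \<le> j\<close> assms(2) Suc.prems by auto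
    then have "x (j+1) < x j" using assms(1) by auto
    then show ?thesis using ih \<open>i \<le> j\<close> by (simp add: of_nat_diff)
  qed
qed

lemma DD_shift:
  fixes N :: nat and x t x0 t0 :: "nat \<Rightarrow> int" and p q :: real
  assumes N: "1 \<le> N" and t1: "t0 1 = t 1" and tj: "\<forall>j\<in>{2..N}. t 1 \<le> t0 j"
    and xd: "\<forall>i\<in>{1..<N}. x (i+1) < x i" and x0d: "\<forall>i\<in>{1..<N}. x0 (i+1) < x0 i"
  shows "DD p q N x t x0 t0 = (if x 1 = x0 1 then
     DD p q (N-1) (\<lambda>i. x (Suc i)) (\<lambda>i. t (Suc i)) (\<lambda>i. x0 (Suc i)) (\<lambda>i. t0 (Suc i)) else 0)"
proof -
  define A where "A = (\<lambda>i j. ff p q (int j - int i) (x (i+1) - x0 (j+1)) (t (i+1) - t0 (j+1)))"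
  have DA: "DD p q N x t x0 t0 = det (mat N N (\<lambda>(i,j). A i j))" unfolding DD_def A_def by simp
  have row0: "A 0 j = 0" if "0 < j" "j < N" "x0 1 \<le> x 1" for j
  proof -
    have "x0 (j+1) \<le> x0 1 - int j" using dec_chain[OF x0d, of 1 "j+1"] that by simp
    then have xp: "x 1 - x0 (j+1) > 0" using that by simp
    have le: "t 1 - t0 (j+1) \<le> 0" using tj that by auto
    show ?thesis
    proof (cases "t 1 - t0 (j+1) < 0")
      case True
      then show ?thesis unfolding A_def by (simp add: ff_neg)
    next
      case False
      then have e: "t (0+1) - t0 (j+1) = 0" using le by simp
      show ?thesis unfolding A_def e using ff_zero_pos[OF xp] by simp
    qed
  qed
  show ?thesis
  proof (cases "x 1 = x0 1")
    case True
    have "det (mat N N (\<lambda>(i,j). A i j)) = A 0 0 * det (mat (N-1) (N-1) (\<lambda>(i,j). A (Suc i) (Suc j)))"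
      by (rule det_first_row) (use N row0 True in auto)
    moreover have "A 0 0 = 1" unfolding A_def using True t1 by (simp add: ff_zero_0)
    moreover have "det (mat (N-1) (N-1) (\<lambda>(i,j). A (Suc i) (Suc j))) =
        DD p q (N-1) (\<lambda>i. x (Suc i)) (\<lambda>i. t (Suc i)) (\<lambda>i. x0 (Suc i)) (\<lambda>i. t0 (Suc i))"
      unfolding DD_def A_def by simp
    ultimately show ?thesis using True DA by simp
  next
    case False
    show ?thesis
    proof (cases "x 1 > x0 1")
      case True
      have "det (mat N N (\<lambda>(i,j). A i j)) = 0"
      proof (rule det_zero_row[of 0])
        show "0 < N" using N by simp
        fix j assume j: "j < N"
        show "A 0 j = 0"
        proof (cases "j = 0")
          case True
          have "x 1 - x0 1 > 0" using \<open>x 1 > x0 1\<close> by simp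
          then show ?thesis unfolding A_def True using t1 by (simp add: ff_zero_pos)
        next
          case False
          then show ?thesis using row0 j \<open>x 1 > x0 1\<close> by simp
        qed
      qed
      then show ?thesis using False DA by simp
    next
      case False2: False
      then have lt: "x 1 < x0 1" using False by simp
      have "det (mat N N (\<lambda>(i,j). A i j)) = 0"
      proof (rule det_zero_col[of 0])
        show "0 < N" using N by simp
        fix i assume i: "i < N"
        show "A i 0 = 0"
        proof (cases "i = 0")
          case True
          then show ?thesis unfolding A_def using t1 lt by (simp add: ff_zero_0)
        next
          case False
          have "x (i+1) \<le> x 1 - int i" using dec_chain[OF xd, of 1 "i+1"] i by simp
          then have "x (i+1) - x0 1 < - int i" using lt by simp
          then show ?thesis unfolding A_def by (intro ff_vanish) auto
        qed
      qed
      then show ?thesis using False DA by simp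
    qed
  qed
qed


definition cls :: "nat \<Rightarrow> (nat \<Rightarrow> int) \<Rightarrow> (nat \<Rightarrow> int) \<Rightarrow> (nat \<Rightarrow> int) \<Rightarrow> (nat \<Rightarrow> int) \<Rightarrow> bool" where
  "cls N x t x0 t0 \<longleftrightarrow> (\<forall>i\<in>{1..<N}. x (i+1) < x i \<and> t i \<le> t (i+1)) \<and>
     (\<forall>i\<in>{1..<N}. x0 (i+1) < x0 i \<and> t0 i \<le> t0 (i+1) + 1) \<and> (\<forall>i\<in>{1..N}. t0 i \<le> t i)"

lemma inc_chain:
  fixes t :: "nat \<Rightarrow> int"
  assumes "\<forall>i\<in>{1..<N}. t i \<le> t (i+1)" "1 \<le> i" "i \<le> j" "j \<le> N"
  shows "t i \<le> t j"
  using assms(3,4)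
proof (induction j)
  case 0
  then show ?case by simp
next
  case (Suc j)
  show ?case
  proof (cases "i = Suc j")
    case True
    then show ?thesis by simp
  next
    case False
    then have "i \<le> j" using Suc.prems by simp
    then have ih: "t i \<le> t j" using Suc by simp
    have "j \<in> {1..<N}" using \<open>i \<le> j\<close> assms(2) Suc.prems by auto
    then show ?thesis using assms(1) ih by force
  qed
qed

lemma GG_0: "GG p q 0 x t x0 t0 = 1"
proof -
  have "NP 0 x t x0 t0 = {\<lambda>i. []}" unfolding NP_def by auto
  then show ?thesis unfolding GG_def N_path_weight_def by (simp add: W_first_nil)
qed

lemma DD_0: "DD p q 0 x t x0 t0 = 1"
  unfolding DD_def by simp

lemma sum_dec:
  fixes f g :: "nat \<Rightarrow> nat"
  assumes "k \<in> A" "finite A" "f k = Suc (g k)" "\<And>i. i \<in> A \<Longrightarrow> i \<noteq> k \<Longrightarrow> f i = g i"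
  shows "sum f A = Suc (sum g A)"
proof -
  have "sum f A = f k + sum f (A - {k})" by (rule sum.remove[OF assms(2,1)])
  moreover have "sum g A = g k + sum g (A - {k})" by (rule sum.remove[OF assms(2,1)])
  moreover have "sum f (A - {k}) = sum g (A - {k})" by (rule sum.cong) (use assms in auto)
  ultimately show ?thesis using assms(3) by simp
qed

lemma main:
  fixes p q :: real
  assumes pq: "p + q = 1"
  shows "cls N x t x0 t0 \<Longrightarrow> GG p q N x t x0 t0 = DD p q N x t x0 t0"
proof (induction "N + (\<Sum>i\<in>{1..N}. nat (t i - t0 i))" arbitrary: N x t x0 t0 rule: less_induct)
  case less
  note IH = less.hyps
  have xd: "\<forall>i\<in>{1..<N}. x (i+1) < x i" and td: "\<forall>i\<in>{1..<N}. t i \<le> t (i+1)"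
    and x0d: "\<forall>i\<in>{1..<N}. x0 (i+1) < x0 i" and t0d: "\<forall>i\<in>{1..<N}. t0 i \<le> t0 (i+1) + 1"
    and tt0: "\<forall>i\<in>{1..N}. t0 i \<le> t i"
    using less.prems unfolding cls_def by auto
  show ?case
  proof (cases "N = 0")
    case True
    then show ?thesis by (simp add: GG_0 DD_0)
  next
    case False
    then have N1: "1 \<le> N" by simp
    have tmono: "t 1 \<le> t j" if "j \<in> {1..N}" for j using inc_chain[OF td, of 1 j] that by auto
    show ?thesis
    proof (cases "\<exists>j\<in>{1..N}. t0 j < t 1")
      case True
      define M where "M = Min (t0 ` {1..N})"
      have Mle: "M \<le> t0 j" if "j \<in> {1..N}" for j unfolding M_def using that by simp
      have "M \<in> t0 ` {1..N}" unfolding M_def using N1 by (intro Min_in) auto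
      then obtain j0 where j0: "j0 \<in> {1..N}" "t0 j0 = M" by auto
      define k where "k = (LEAST k. k \<in> {1..N} \<and> t0 k = M)"
      have kP: "k \<in> {1..N} \<and> t0 k = M" unfolding k_def by (rule LeastI[of _ j0]) (use j0 in auto)
      have kmin: "\<not> (j \<in> {1..N} \<and> t0 j = M)" if "j < k" for j
        using that unfolding k_def by (rule not_less_Least)
      have k: "k \<in> {1..N}" and tkM: "t0 k = M" using kP by auto
      have Mlt: "M < t 1" using True Mle by force
      have tk: "t0 k < t i" if "i \<in> {1..N}" for i using tmono[OF that] Mlt tkM by simp
      have R: "t0 k \<le> t0 (k+1)" if "k < N" using Mle[of "k+1"] tkM that by simp
      have L: "t0 (k-1) = t0 k + 1" if "1 < k"
      proof -
        have "k - 1 \<in> {1..N}" "k - 1 < k" using k that by auto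
        then have "t0 (k-1) \<noteq> M" "M \<le> t0 (k-1)" using kmin Mle by auto
        moreover have "t0 (k-1) \<le> t0 (k-1+1) + 1"
        proof -
          have "k - 1 \<in> {1..<N}" using k that by auto
          then show ?thesis using t0d by blast
        qed
        moreover have "k - 1 + 1 = k" using that by simp
        ultimately show ?thesis using tkM by simp
      qed
      define \<beta> where "\<beta> = (1 < k \<and> x0 (k-1) = x0 k + 1)"
      define t0' where "t0' = t0(k := t0 k + 1)"
      define x0' where "x0' = x0(k := x0 k + 1)"
      have Gs: "GG p q N x t x0 t0 = (if \<beta> then 0 else p) * GG p q N x t x0' t0'
                            + (if \<beta> then 1 else q) * GG p q N x t x0 t0'"
        unfolding \<beta>_def x0'_def t0'_def
        by (rule GG_step[where N=N and k=k and x=x and t=t and x0=x0 and t0=t0 and p=p and q=q])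
          (use k tk[OF k] R L in auto)
      have Ds: "DD p q N x t x0 t0 = (if \<beta> then 0 else p) * DD p q N x t x0' t0'
                            + (if \<beta> then 1 else q) * DD p q N x t x0 t0'"
        unfolding \<beta>_def x0'_def t0'_def by (rule DD_step[OF pq k]) (use tk L in auto)
      have meas: "N + (\<Sum>i\<in>{1..N}. nat (t i - t0' i)) < N + (\<Sum>i\<in>{1..N}. nat (t i - t0 i))"
      proof -
        have "(\<Sum>i\<in>{1..N}. nat (t i - t0 i)) = Suc (\<Sum>i\<in>{1..N}. nat (t i - t0' i))"
          by (rule sum_dec[OF k]) (use tk[OF k] in \<open>auto simp: t0'_def\<close>)
        then show ?thesis by simp
      qed
      have clsS: "cls N x t x0 t0'"
        unfolding cls_def t0'_def using xd td x0d t0d tt0 tk[OF k] R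
        by (auto simp: le_diff_eq)
      have eqS: "GG p q N x t x0 t0' = DD p q N x t x0 t0'" by (rule IH[OF meas clsS])
      show ?thesis
      proof (cases \<beta>)
        case True
        then show ?thesis using Gs Ds eqS by simp
      next
        case False
        have clsJ: "cls N x t x0' t0'"
        proof -
          have a: "x0' (i+1) < x0' i" if "i \<in> {1..<N}" for i
          proof -
            have "x0 (i+1) < x0 i" using x0d that by auto
            moreover have "i = k - 1 \<Longrightarrow> x0 k + 1 < x0 (k-1)"
              using False x0d k that \<beta>_def by force
            ultimately show ?thesis unfolding x0'_def using that by auto
          qed
          have b: "cls N x t x0 t0'" by (rule clsS)
          show ?thesis using a b unfolding cls_def by simp
        qed
        have eqJ: "GG p q N x t x0' t0' = DD p q N x t x0' t0'" by (rule IH[OF meas clsJ])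
        show ?thesis using Gs Ds eqS eqJ by simp
      qed
    next
      case False
      then have h: "\<forall>j\<in>{1..N}. t 1 \<le> t0 j" by (auto simp: not_less)
      then have tj: "\<forall>j\<in>{2..N}. t 1 \<le> t0 j" by auto
      have one: "1 \<in> {1..N}" using N1 by simp
      have t1: "t0 1 = t 1" using h[rule_format, OF one] tt0[rule_format, OF one] by simp
      have Gs: "GG p q N x t x0 t0 = (if x 1 = x0 1 then
         GG p q (N-1) (\<lambda>i. x (Suc i)) (\<lambda>i. t (Suc i)) (\<lambda>i. x0 (Suc i)) (\<lambda>i. t0 (Suc i)) else 0)"
        by (rule GG_shift[where N=N and x=x and t=t and x0=x0 and t0=t0 and p=p and q=q]) (use N1 t1 tj in auto)
      have Ds: "DD p q N x t x0 t0 = (if x 1 = x0 1 then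
         DD p q (N-1) (\<lambda>i. x (Suc i)) (\<lambda>i. t (Suc i)) (\<lambda>i. x0 (Suc i)) (\<lambda>i. t0 (Suc i)) else 0)"
        by (rule DD_shift[where N=N and x=x and t=t and x0=x0 and t0=t0 and p=p and q=q]) (use N1 t1 tj xd x0d in auto)
      have meas: "(N-1) + (\<Sum>i\<in>{1..N-1}. nat (t (Suc i) - t0 (Suc i))) < N + (\<Sum>i\<in>{1..N}. nat (t i - t0 i))"
      proof -
        have "(\<Sum>i\<in>{1..N-1}. nat (t (Suc i) - t0 (Suc i))) = (\<Sum>i\<in>{Suc 1..Suc (N-1)}. nat (t i - t0 i))"
          by (rule sum.shift_bounds_cl_Suc_ivl[symmetric])
        also have "\<dots> \<le> (\<Sum>i\<in>{1..N}. nat (t i - t0 i))"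
          by (rule sum_mono2) auto
        finally show ?thesis using N1 by simp
      qed
      have clsB: "cls (N-1) (\<lambda>i. x (Suc i)) (\<lambda>i. t (Suc i)) (\<lambda>i. x0 (Suc i)) (\<lambda>i. t0 (Suc i))"
        unfolding cls_def using xd td x0d t0d tt0 by auto
      have "GG p q (N-1) (\<lambda>i. x (Suc i)) (\<lambda>i. t (Suc i)) (\<lambda>i. x0 (Suc i)) (\<lambda>i. t0 (Suc i)) =
            DD p q (N-1) (\<lambda>i. x (Suc i)) (\<lambda>i. t (Suc i)) (\<lambda>i. x0 (Suc i)) (\<lambda>i. t0 (Suc i))"
        by (rule IH[OF meas clsB])
      then show ?thesis using Gs Ds by simp
    qed
  qed
qed

theorem proposition2:
  fixes N :: nat and p q :: real and x t x0 t0 :: "nat \<Rightarrow> int"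
  assumes "N \<ge> 1" and "0 < p" and "p < 1" and "q = 1 - p"
    and "admissible N x0 t0" and "admissible N x t"
    and "\<forall>i\<in>{1..N}. t i > t0 i"
  shows "complex_of_real (green p q N x t x0 t0) =
    det (mat N N (\<lambda>(i, j). F_fun p q (int j - int i) (x (i+1) - x0 (j+1)) (t (i+1) - t0 (j+1))))"
proof -
  have pq: "p + q = 1" using assms(4) by simp
  have cl: "cls N x t x0 t0" using assms(5,6,7) unfolding cls_def admissible_def
    by (auto intro: less_imp_le add_increasing2)
  have "green p q N x t x0 t0 = GG p q N x t x0 t0" by (rule green_GG) (use assms(7) in auto)
  also have "\<dots> = DD p q N x t x0 t0" by (rule main[OF pq cl])
  finally have g: "green p q N x t x0 t0 = DD p q N x t x0 t0" .
  have m: "mat N N (\<lambda>(i, j). F_fun p q (int j - int i) (x (i+1) - x0 (j+1)) (t (i+1) - t0 (j+1))) =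
    map_mat complex_of_real (mat N N (\<lambda>(i, j). ff p q (int j - int i) (x (i+1) - x0 (j+1)) (t (i+1) - t0 (j+1))))"
    by (rule eq_matI) (auto simp: F_fun_ff)
  show ?thesis unfolding m g DD_def by (simp add: of_real_hom.hom_det)
qed

end
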